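(* Let $k,r\ge1$ be integers and let $m=\lceil r/2\rceil$. Then $$\psi_{(3,2^k,1^r)}=\begin{cases}\big[\psi_{(2^{m+k+1})}-h_2p_1^{r+1}\psi_{(2^k)}\big]+p_1^r(2h_3+e_3)\psi_{(2^k)}, & r\text{ odd},\\[2pt] p_1\big[\psi_{(2^{m+k+1})}-h_2p_1^{r}\psi_{(2^k)}\big]+p_1^r(2h_3+e_3)\psi_{(2^k)}, & r\text{ even}.\end{cases}$$
   Context: $p_i$, $h_i$, $e_i$ denote power sum, complete homogeneous and elementary symmetric functions, and $p_\lambda=\prod_i p_{\lambda_i}$. Reverse lexicographic order on partitions of $n$: for distinct $\lambda,\mu\vdash n$, $\lambda>\mu$ iff $\lambda_j>\mu_j$ at the first index $j$ where they differ; $(1^n)$ is minimal. For $\mu\vdash n$, $\psi_\mu=\sum_{\lambda\vdash n,\ (1^n)\le\lambda\le\mu}p_\lambda$. In particular $\psi_{(2^j)}=\sum_{i=0}^j p_2^ip_1^{2j-2i}$. *)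

theory Defs
  imports Complex_Main
begin

text \<open>Symmetric functions are represented by their evaluations at
  finitely many variables x 0, ..., x (N-1) (for arbitrary N and arbitrary
  real values); an identity in the ring of symmetric functions holds iff it
  holds for all such evaluations.\<close>

definition partitions :: "nat \<Rightarrow> nat list set" where
  "partitions n = {lam. sorted_wrt (\<ge>) lam \<and> (\<forall>a\<in>set lam. 0 < a) \<and> sum_list lam = n}"

definition rlex_le :: "nat list \<Rightarrow> nat list \<Rightarrow> bool" where
  "rlex_le lam mu \<longleftrightarrow> lam = mu \<or> (lam, mu) \<in> lexord {(a, b). a < b}"

definition psum :: "nat \<Rightarrow> (nat \<Rightarrow> real) \<Rightarrow> nat \<Rightarrow> real" where
  "psum N x i = (\<Sum>j<N. x j ^ i)"

definition psum_part :: "nat \<Rightarrow> (nat \<Rightarrow> real) \<Rightarrow> nat list \<Rightarrow> real" where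
  "psum_part N x lam = prod_list (map (psum N x) lam)"

definition hsym :: "nat \<Rightarrow> (nat \<Rightarrow> real) \<Rightarrow> nat \<Rightarrow> real" where
  "hsym N x d = (\<Sum>\<alpha>\<in>{\<alpha>::nat \<Rightarrow> nat. (\<forall>j. N \<le> j \<longrightarrow> \<alpha> j = 0) \<and> (\<Sum>j<N. \<alpha> j) = d}.
                    \<Prod>j<N. x j ^ \<alpha> j)"

definition esym :: "nat \<Rightarrow> (nat \<Rightarrow> real) \<Rightarrow> nat \<Rightarrow> real" where
  "esym N x d = (\<Sum>S\<in>{S. S \<subseteq> {..<N} \<and> card S = d}. \<Prod>j\<in>S. x j)"

definition psi :: "nat \<Rightarrow> (nat \<Rightarrow> real) \<Rightarrow> nat list \<Rightarrow> real" where
  "psi N x mu = (\<Sum>lam\<in>{lam \<in> partitions (sum_list mu).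
                     rlex_le (replicate (sum_list mu) 1) lam \<and> rlex_le lam mu}.
                   psum_part N x lam)"

end

theory Submission
  imports Defs
begin


lemma asymR: "asym {(a::nat, b). a < b}" by (auto intro: asymI)

lemma rlex_antisym: "rlex_le a b \<Longrightarrow> rlex_le b a \<Longrightarrow> a = b"
  unfolding rlex_le_def using lexord_asymmetric[OF asymR] by blast

lemma part_cons: "a # lam \<in> partitions n \<longleftrightarrow>
   0 < a \<and> (\<forall>b\<in>set lam. b \<le> a) \<and> lam \<in> partitions (n - a) \<and> a \<le> n"
  unfolding partitions_def by auto

lemma part_Nil: "[] \<in> partitions n \<longleftrightarrow> n = 0"
  unfolding partitions_def by auto

lemma ones: "lam \<in> partitions n \<Longrightarrow> \<forall>a\<in>set lam. a \<le> 1 \<Longrightarrow> lam = replicate n 1"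
proof (induction lam arbitrary: n)
  case Nil thus ?case by (simp add: part_Nil)
next
  case (Cons a lam)
  have ap: "0 < a" "lam \<in> partitions (n - a)" "a \<le> n" using Cons.prems(1) part_cons by auto
  then have a1: "a = 1" using Cons.prems(2) by auto
  have "lam = replicate (n - 1) 1" using Cons.IH[OF ap(2)[unfolded a1]] Cons.prems(2) by simp
  then show ?case using a1 ap(3) by (cases n) auto
qed

lemma claimA: "lam \<in> partitions n \<Longrightarrow> rlex_le (replicate n 1) lam"
proof (cases "\<forall>a\<in>set lam. a \<le> 1")
  case True
  assume "lam \<in> partitions n" from ones[OF this True] have "lam = replicate n 1" .
  then show ?thesis by (simp add: rlex_le_def)
next
  case False
  assume p: "lam \<in> partitions n"
  then obtain a rest where l: "lam = a # rest" using False by (cases lam) auto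
  obtain c where c: "c \<in> set lam" "c > 1" using False by auto
  have "\<forall>b\<in>set rest. b \<le> a" using p l part_cons by blast
  then have "c \<le> a" using c l by auto
  then have "a > 1" using c by simp
  then have "n \<ge> 1" using p l unfolding partitions_def by auto
  then obtain n' where "n = Suc n'" by (cases n) auto
  then show ?thesis using l \<open>a > 1\<close> unfolding rlex_le_def by (simp del: lexord_cons_cons) (simp add: lexord_cons_cons)
qed

lemma claimB: "lam \<in> partitions (2*j+b) \<Longrightarrow>
   rlex_le lam (replicate j 2 @ replicate b 1) \<longleftrightarrow>
   (\<exists>i\<le>j. lam = replicate i 2 @ replicate (2*j+b-2*i) 1)"
proof (induction j arbitrary: lam b)
  case 0
  then show ?case using claimA rlex_antisym by (auto simp: rlex_le_def)
next
  case (Suc j)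
  obtain a lam' where l: "lam = a # lam'" using Suc.prems by (cases lam) (auto simp: part_Nil)
  have ap: "0 < a" "\<forall>c\<in>set lam'. c \<le> a" "lam' \<in> partitions (2*Suc j+b - a)" "a \<le> 2*Suc j + b"
    using Suc.prems l part_cons by auto
  have rl: "rlex_le lam (replicate (Suc j) 2 @ replicate b 1) \<longleftrightarrow>
      a < 2 \<or> a = 2 \<and> rlex_le lam' (replicate j 2 @ replicate b 1)"
    using l by (auto simp: rlex_le_def)
  have ex: "(\<exists>i\<le>Suc j. lam = replicate i 2 @ replicate (2*Suc j+b-2*i) 1) \<longleftrightarrow>
     (lam = replicate (2*Suc j+b) 1 \<or> (\<exists>i\<le>j. lam = replicate (Suc i) 2 @ replicate (2*Suc j+b-2*Suc i) 1))"
  proof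
    assume "\<exists>i\<le>Suc j. lam = replicate i 2 @ replicate (2*Suc j+b-2*i) 1"
    then obtain i where "i \<le> Suc j" "lam = replicate i 2 @ replicate (2*Suc j+b-2*i) 1" by blast
    then show "lam = replicate (2*Suc j+b) 1 \<or> (\<exists>i\<le>j. lam = replicate (Suc i) 2 @ replicate (2*Suc j+b-2*Suc i) 1)"
      by (cases i) auto
  next
    assume "lam = replicate (2*Suc j+b) 1 \<or> (\<exists>i\<le>j. lam = replicate (Suc i) 2 @ replicate (2*Suc j+b-2*Suc i) 1)"
    then show "\<exists>i\<le>Suc j. lam = replicate i 2 @ replicate (2*Suc j+b-2*i) 1"
    proof
      assume "lam = replicate (2*Suc j+b) 1" then show ?thesis by (intro exI[of _ 0]) simp
    next
      assume "\<exists>i\<le>j. lam = replicate (Suc i) 2 @ replicate (2*Suc j+b-2*Suc i) 1"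
      then show ?thesis using Suc_le_mono by blast
    qed
  qed
  consider "a = 1" | "a = 2" | "a \<ge> 3" using ap(1) by linarith
  then show ?case
  proof cases
    case 1
    then have "lam = replicate (2*Suc j+b) 1" using ones[OF Suc.prems] ap l by auto
    then show ?thesis using rl 1 ex by auto
  next
    case 2
    have "lam' \<in> partitions (2*j+b)" using ap 2 by simp
    note IH = Suc.IH[OF this]
    have "(\<exists>i\<le>j. lam = replicate (Suc i) 2 @ replicate (2*Suc j+b-2*Suc i) 1) \<longleftrightarrow>
          (\<exists>i\<le>j. lam' = replicate i 2 @ replicate (2*j+b-2*i) 1)" using l 2 by simp
    moreover have "lam \<noteq> replicate (2*Suc j+b) 1" using l 2 by simp
    ultimately show ?thesis using rl ex IH 2 by blast
  next
    case 3
    have "lam \<noteq> replicate (2*Suc j+b) 1" using l 3 by simp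
    moreover have "\<not> (\<exists>i\<le>j. lam = replicate (Suc i) 2 @ replicate (2*Suc j+b-2*Suc i) 1)" using l 3 by auto
    ultimately show ?thesis using rl ex 3 by auto
  qed
qed

lemma sorted_wrt_rep: "R a a \<Longrightarrow> sorted_wrt R (replicate n a)"
  by (induction n) auto

definition g :: "nat \<Rightarrow> nat \<Rightarrow> nat list" where
  "g n i = replicate i 2 @ replicate (n - 2*i) 1"

lemma g_part: "2*i \<le> n \<Longrightarrow> g n i \<in> partitions n"
  unfolding g_def partitions_def by (auto simp: sorted_wrt_append sum_list_replicate sorted_wrt_rep)

lemma g_len: "2*i \<le> n \<Longrightarrow> length (g n i) = n - i"
  unfolding g_def by simp

lemma g_inj: "inj_on (g n) {..n div 2}"
proof (rule inj_onI)
  fix i i' assume a: "i \<in> {..n div 2}" "i' \<in> {..n div 2}" "g n i = g n i'"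
  then have "2*i \<le> n" "2*i' \<le> n" by auto
  then have "n - i = n - i'" using g_len a(3) by metis
  then show "i = i'" using \<open>2*i \<le> n\<close> \<open>2*i' \<le> n\<close> by linarith
qed

lemma claimD: "lam \<in> partitions n \<Longrightarrow> \<forall>c\<in>set lam. c \<le> 2 \<Longrightarrow> \<exists>i. 2*i \<le> n \<and> lam = g n i"
proof (induction lam arbitrary: n)
  case Nil thus ?case by (auto simp: part_Nil g_def)
next
  case (Cons a lam)
  have ap: "0 < a" "\<forall>c\<in>set lam. c \<le> a" "lam \<in> partitions (n - a)" "a \<le> n"
    using Cons.prems part_cons by auto
  show ?case
  proof (cases "a = 1")
    case True
    then have "a # lam = replicate n 1" using ones[OF Cons.prems(1)] Cons.prems ap by auto
    then show ?thesis by (intro exI[of _ 0]) (simp add: g_def)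
  next
    case False
    then have a2: "a = 2" using ap Cons.prems(2) by auto
    obtain i where "2*i \<le> n - 2" "lam = g (n-2) i" using Cons.IH[of "n-2"] ap a2 Cons.prems(2) by auto
    then show ?thesis using a2 ap(4) by (intro exI[of _ "Suc i"]) (auto simp: g_def)
  qed
qed

lemma g_le2: "\<forall>c\<in>set (g n i). c \<le> 2" unfolding g_def by auto

lemma psum_part_g: "psum_part N x (g n i) = psum N x 2 ^ i * psum N x 1 ^ (n - 2*i)"
  unfolding g_def psum_part_def by simp

lemma set_twos: "{lam \<in> partitions (2*j). rlex_le (replicate (2*j) 1) lam \<and> rlex_le lam (replicate j 2)}
   = g (2*j) ` {..j}"
proof -
  have "lam \<in> partitions (2*j) \<Longrightarrow> rlex_le lam (replicate j 2 @ replicate 0 1) \<longleftrightarrow>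
        (\<exists>i\<le>j. lam = g (2*j) i)" for lam
    using claimB[of lam j 0] by (simp add: g_def)
  note H = this
  show ?thesis
  proof (rule set_eqI, rule iffI)
    fix lam assume "lam \<in> {lam \<in> partitions (2*j). rlex_le (replicate (2*j) 1) lam \<and> rlex_le lam (replicate j 2)}"
    then show "lam \<in> g (2*j) ` {..j}" using H[of lam] by auto
  next
    fix lam assume "lam \<in> g (2*j) ` {..j}"
    then obtain i where i: "i \<le> j" "lam = g (2*j) i" by auto
    then have p: "lam \<in> partitions (2*j)" using g_part by simp
    then show "lam \<in> {lam \<in> partitions (2*j). rlex_le (replicate (2*j) 1) lam \<and> rlex_le lam (replicate j 2)}"
      using H[OF p] claimA[OF p] i by auto
  qed
qed

lemma psi_twos: "psi N x (replicate j 2) = (\<Sum>i\<le>j. psum N x 2 ^ i * psum N x 1 ^ (2*j - 2*i))"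
proof -
  have "psi N x (replicate j 2) = sum (psum_part N x) (g (2*j) ` {..j})"
    unfolding psi_def using set_twos[of j] by (simp add: sum_list_replicate mult.commute)
  also have "\<dots> = (\<Sum>i\<le>j. psum_part N x (g (2*j) i))"
    by (rule sum.reindex[unfolded comp_def]) (rule inj_on_subset[OF g_inj], auto)
  finally show ?thesis by (simp add: psum_part_g)
qed

lemma rlex_head: "a < 3 \<Longrightarrow> rlex_le (a # t) (3 # mu)"
  unfolding rlex_le_def by simp

lemma g_head: "2*i \<le> n \<Longrightarrow> n > 0 \<Longrightarrow> \<exists>a t. g n i = a # t \<and> a < 3"
  unfolding g_def by (cases i; cases n) auto

lemma set_main:
  assumes n: "n = 3 + 2*k + r"
  shows "{lam \<in> partitions n. rlex_le (replicate n 1) lam \<and> rlex_le lam (3 # replicate k 2 @ replicate r 1)}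
     = g n ` {..n div 2} \<union> (\<lambda>i. 3 # g (2*k+r) i) ` {..k}" (is "?L = ?A \<union> ?B")
proof (rule set_eqI, rule iffI)
  fix lam assume "lam \<in> ?L"
  then have p: "lam \<in> partitions n" and le: "rlex_le lam (3 # replicate k 2 @ replicate r 1)" by auto
  obtain a lam' where l: "lam = a # lam'" using p n by (cases lam) (auto simp: part_Nil)
  have ap: "0 < a" "\<forall>c\<in>set lam'. c \<le> a" "lam' \<in> partitions (n - a)" "a \<le> n"
    using p l part_cons by auto
  have "a < 3 \<or> a = 3 \<and> rlex_le lam' (replicate k 2 @ replicate r 1)"
    using le l unfolding rlex_le_def by auto
  then show "lam \<in> ?A \<union> ?B"
  proof
    assume "a < 3"
    then have "\<forall>c\<in>set lam. c \<le> 2" using ap l by auto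
    then obtain i where "2*i \<le> n" "lam = g n i" using claimD[OF p] by blast
    then show ?thesis by auto
  next
    assume h: "a = 3 \<and> rlex_le lam' (replicate k 2 @ replicate r 1)"
    then have p': "lam' \<in> partitions (2*k+r)" using ap n by simp
    obtain i where "i \<le> k" "lam' = g (2*k+r) i" using claimB[OF p'] h by (auto simp: g_def)
    then show ?thesis using h l by auto
  qed
next
  fix lam assume "lam \<in> ?A \<union> ?B"
  then show "lam \<in> ?L"
  proof
    assume "lam \<in> ?A"
    then obtain i where i: "i \<le> n div 2" "lam = g n i" by auto
    then have i2: "2*i \<le> n" by auto
    then have p: "lam \<in> partitions n" using g_part i by simp
    obtain a t where "g n i = a # t" "a < 3" using g_head[OF i2] n by auto
    then have "rlex_le lam (3 # replicate k 2 @ replicate r 1)" using i rlex_head by simp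
    then show ?thesis using p claimA[OF p] by simp
  next
    assume "lam \<in> ?B"
    then obtain i where i: "i \<le> k" "lam = 3 # g (2*k+r) i" by auto
    have p': "g (2*k+r) i \<in> partitions (2*k+r)" using g_part i by simp
    have "lam \<in> partitions n" using i p' n g_le2[of "2*k+r" i] by (auto simp: part_cons)
    moreover have "rlex_le (g (2*k+r) i) (replicate k 2 @ replicate r 1)"
      using claimB[OF p'] i by (auto simp: g_def)
    then have "rlex_le lam (3 # replicate k 2 @ replicate r 1)" using i by (auto simp: rlex_le_def)
    ultimately show ?thesis using claimA by simp
  qed
qed

lemma psi_main:
  assumes n: "n = 3 + 2*k + r"
  shows "psi N x (3 # replicate k 2 @ replicate r 1) =
    (\<Sum>i\<le>n div 2. psum N x 2 ^ i * psum N x 1 ^ (n - 2*i))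
    + psum N x 3 * (\<Sum>i\<le>k. psum N x 2 ^ i * psum N x 1 ^ (2*k + r - 2*i))"
proof -
  have sl: "sum_list (3 # replicate k 2 @ replicate r 1) = n" using n by (simp add: sum_list_replicate)
  have "psi N x (3 # replicate k 2 @ replicate r 1) =
     sum (psum_part N x) (g n ` {..n div 2} \<union> (\<lambda>i. 3 # g (2*k+r) i) ` {..k})"
    unfolding psi_def sl using set_main[OF n] by simp
  also have "\<dots> = sum (psum_part N x) (g n ` {..n div 2}) + sum (psum_part N x) ((\<lambda>i. 3 # g (2*k+r) i) ` {..k})"
  proof (rule sum.union_disjoint)
    show "g n ` {..n div 2} \<inter> (\<lambda>i. 3 # g (2 * k + r) i) ` {..k} = {}"
    proof (rule ccontr)
      assume "g n ` {..n div 2} \<inter> (\<lambda>i. 3 # g (2 * k + r) i) ` {..k} \<noteq> {}"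
      then obtain i j where "g n i = 3 # g (2*k+r) j" by blast
      then have "3 \<in> set (g n i)" by simp
      then show False using g_le2[of n i] by fastforce
    qed
  qed auto
  also have "sum (psum_part N x) (g n ` {..n div 2}) = (\<Sum>i\<le>n div 2. psum_part N x (g n i))"
    by (rule sum.reindex[unfolded comp_def]) (rule g_inj)
  also have "sum (psum_part N x) ((\<lambda>i. 3 # g (2*k+r) i) ` {..k}) = (\<Sum>i\<le>k. psum_part N x (3 # g (2*k+r) i))"
  proof (rule sum.reindex[unfolded comp_def])
    have "inj_on (g (2*k+r)) {..k}" by (rule inj_on_subset[OF g_inj]) auto
    then show "inj_on (\<lambda>i. 3 # g (2*k+r) i) {..k}" by (auto simp: inj_on_def)
  qed
  finally show ?thesis
    by (simp add: psum_part_g sum_distrib_left psum_part_def[of N x "3 # _"] psum_part_def[of N x "g _ _", symmetric])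
qed



definition HS :: "nat \<Rightarrow> nat \<Rightarrow> (nat \<Rightarrow> nat) set" where
  "HS N d = {\<alpha>::nat \<Rightarrow> nat. (\<forall>j. N \<le> j \<longrightarrow> \<alpha> j = 0) \<and> (\<Sum>j<N. \<alpha> j) = d}"

lemma hsym_HS: "hsym N x d = (\<Sum>\<alpha>\<in>HS N d. \<Prod>j<N. x j ^ \<alpha> j)"
  unfolding hsym_def HS_def by simp

lemma HS_finite: "finite (HS N d)"
proof -
  have fin: "finite {f. \<forall>j. (j \<in> {..<N} \<longrightarrow> f j \<in> {..d}) \<and> (j \<notin> {..<N} \<longrightarrow> (f::nat\<Rightarrow>nat) j = 0)}"
    by (intro finite_set_of_finite_funs) simp_all
  have "HS N d \<subseteq> {f. \<forall>j. (j \<in> {..<N} \<longrightarrow> f j \<in> {..d}) \<and> (j \<notin> {..<N} \<longrightarrow> f j = 0)}"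
  proof
    fix f assume f: "f \<in> HS N d"
    have "f j \<le> d" if j: "j < N" for j
    proof -
      have "f j \<le> (\<Sum>j<N. f j)" using j by (intro member_le_sum) auto
      then show ?thesis using f unfolding HS_def by simp
    qed
    then show "f \<in> {f. \<forall>j. (j \<in> {..<N} \<longrightarrow> f j \<in> {..d}) \<and> (j \<notin> {..<N} \<longrightarrow> f j = 0)}"
      using f unfolding HS_def by auto
  qed
  then show ?thesis using fin finite_subset by blast
qed

lemma HS_0: "HS 0 d = (if d = 0 then {\<lambda>_. 0} else {})"
  unfolding HS_def by auto

lemma HS_Suc: "HS (Suc N) d = (\<Union>a\<in>{..d}. (\<lambda>\<beta>. \<beta>(N:=a)) ` HS N (d - a))"
proof (rule set_eqI, rule iffI)
  fix \<alpha> assume h: "\<alpha> \<in> HS (Suc N) d"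
  let ?\<beta> = "\<alpha>(N:=0)"
  have s: "(\<Sum>j<N. \<alpha> j) + \<alpha> N = d" using h unfolding HS_def by simp
  have "(\<Sum>j<N. ?\<beta> j) = (\<Sum>j<N. \<alpha> j)" by (intro sum.cong) auto
  then have "?\<beta> \<in> HS N (d - \<alpha> N)" using h s unfolding HS_def by auto
  moreover have "\<alpha> = ?\<beta>(N := \<alpha> N)" by simp
  moreover have "\<alpha> N \<in> {..d}" using s by auto
  ultimately show "\<alpha> \<in> (\<Union>a\<in>{..d}. (\<lambda>\<beta>. \<beta>(N:=a)) ` HS N (d - a))" by blast
next
  fix \<alpha> assume "\<alpha> \<in> (\<Union>a\<in>{..d}. (\<lambda>\<beta>. \<beta>(N:=a)) ` HS N (d - a))"
  then obtain a \<beta> where a: "a \<le> d" "\<beta> \<in> HS N (d - a)" "\<alpha> = \<beta>(N:=a)" by auto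
  have "(\<Sum>j<N. \<alpha> j) = (\<Sum>j<N. \<beta> j)" using a(3) by (intro sum.cong) auto
  then show "\<alpha> \<in> HS (Suc N) d" using a unfolding HS_def by auto
qed

lemma hsym_Suc: "hsym (Suc N) x d = (\<Sum>a\<le>d. x N ^ a * hsym N x (d - a))"
proof -
  have "hsym (Suc N) x d = (\<Sum>a\<le>d. \<Sum>\<alpha>\<in>(\<lambda>\<beta>. \<beta>(N:=a)) ` HS N (d - a). \<Prod>j<Suc N. x j ^ \<alpha> j)"
    unfolding hsym_HS HS_Suc
  proof (rule sum.UNION_disjoint)
    show "\<forall>i\<in>{..d}. \<forall>j\<in>{..d}. i \<noteq> j \<longrightarrow>
       (\<lambda>\<beta>. \<beta>(N:=i)) ` HS N (d - i) \<inter> (\<lambda>\<beta>. \<beta>(N:=j)) ` HS N (d - j) = {}"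
    proof (intro ballI impI)
      fix i j :: nat assume "i \<noteq> j"
      then show "(\<lambda>\<beta>. \<beta>(N:=i)) ` HS N (d - i) \<inter> (\<lambda>\<beta>. \<beta>(N:=j)) ` HS N (d - j) = {}"
        by (auto dest: fun_cong[of _ _ N])
    qed
  qed (auto intro: HS_finite)
  also have "\<dots> = (\<Sum>a\<le>d. x N ^ a * hsym N x (d - a))"
  proof (rule sum.cong[OF refl])
    fix a
    have inj: "inj_on (\<lambda>\<beta>. \<beta>(N:=a)) (HS N (d - a))"
    proof (rule inj_onI)
      fix b1 b2 assume "b1 \<in> HS N (d - a)" "b2 \<in> HS N (d - a)" "b1(N:=a) = b2(N:=a)"
      then have z: "b1 N = 0" "b2 N = 0" and e: "b1(N:=a) = b2(N:=a)" unfolding HS_def by auto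
      show "b1 = b2"
      proof
        fix j show "b1 j = b2 j"
        proof (cases "j = N")
          case True then show ?thesis using z by simp
        next
          case False then show ?thesis using fun_cong[OF e, of j] by simp
        qed
      qed
    qed
    have "(\<Sum>\<alpha>\<in>(\<lambda>\<beta>. \<beta>(N:=a)) ` HS N (d - a). \<Prod>j<Suc N. x j ^ \<alpha> j)
        = (\<Sum>\<beta>\<in>HS N (d - a). \<Prod>j<Suc N. x j ^ (\<beta>(N:=a)) j)"
      by (rule sum.reindex[OF inj, unfolded comp_def])
    also have "\<dots> = (\<Sum>\<beta>\<in>HS N (d - a). x N ^ a * (\<Prod>j<N. x j ^ \<beta> j))"
    proof (rule sum.cong[OF refl])
      fix \<beta>
      have "(\<Prod>j<N. x j ^ (\<beta>(N:=a)) j) = (\<Prod>j<N. x j ^ \<beta> j)" by (intro prod.cong) auto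
      then show "(\<Prod>j<Suc N. x j ^ (\<beta>(N:=a)) j) = x N ^ a * (\<Prod>j<N. x j ^ \<beta> j)" by simp
    qed
    finally show "(\<Sum>\<alpha>\<in>(\<lambda>\<beta>. \<beta>(N:=a)) ` HS N (d - a). \<Prod>j<Suc N. x j ^ \<alpha> j) = x N ^ a * hsym N x (d - a)"
      by (simp add: hsym_HS sum_distrib_left)
  qed
  finally show ?thesis .
qed

lemma hsym_0: "hsym 0 x d = (if d = 0 then 1 else 0)"
  unfolding hsym_HS HS_0 by simp

lemma psum_Suc: "psum (Suc N) x i = psum N x i + x N ^ i"
  unfolding psum_def by simp

lemma psum_0: "psum 0 x i = 0" unfolding psum_def by simp

lemma h0: "hsym N x 0 = 1"
  by (induction N) (simp_all add: hsym_0 hsym_Suc)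

lemma h1: "hsym N x 1 = psum N x 1"
  by (induction N) (simp_all add: hsym_0 hsym_Suc psum_0 psum_Suc h0)

lemma h2: "2 * hsym N x 2 = psum N x 1 ^ 2 + psum N x 2"
proof (induction N)
  case 0 then show ?case by (simp add: hsym_0 psum_0)
next
  case (Suc N)
  have "hsym (Suc N) x 2 = hsym N x 2 + x N * hsym N x 1 + x N ^ 2 * hsym N x 0"
    by (simp add: hsym_Suc numeral_2_eq_2)
  then show ?case using Suc by (simp add: h0 h1 h1[unfolded One_nat_def] psum_Suc algebra_simps power2_eq_square)
qed

lemma h3: "6 * hsym N x 3 = psum N x 1 ^ 3 + 3 * psum N x 1 * psum N x 2 + 2 * psum N x 3"
proof (induction N)
  case 0 then show ?case by (simp add: hsym_0 psum_0)
next
  case (Suc N)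
  have "hsym (Suc N) x 3 = hsym N x 3 + x N * hsym N x 2 + x N ^ 2 * hsym N x 1 + x N ^ 3 * hsym N x 0"
    by (simp add: hsym_Suc numeral_3_eq_3 numeral_2_eq_2)
  then have "6 * hsym (Suc N) x 3 = 6 * hsym N x 3 + 3 * x N * (2 * hsym N x 2) + 6 * x N ^ 2 * psum N x 1 + 6 * x N ^ 3"
    by (simp add: h0 h1 h1[unfolded One_nat_def] algebra_simps)
  also have "\<dots> = psum (Suc N) x 1 ^ 3 + 3 * psum (Suc N) x 1 * psum (Suc N) x 2 + 2 * psum (Suc N) x 3"
    unfolding Suc h2 psum_Suc by (simp add: algebra_simps power2_eq_square power3_eq_cube)
  finally show ?case .
qed

definition ES :: "nat \<Rightarrow> nat \<Rightarrow> nat set set" where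
  "ES N d = {S. S \<subseteq> {..<N} \<and> card S = d}"

lemma ES_finite: "finite (ES N d)"
  by (rule finite_subset[of _ "Pow {..<N}"]) (auto simp: ES_def)

lemma esym_ES: "esym N x d = (\<Sum>S\<in>ES N d. \<Prod>j\<in>S. x j)"
  unfolding esym_def ES_def by simp

lemma ES_0: "ES N 0 = {{}}"
  unfolding ES_def using finite_subset by fastforce

lemma ES_zero: "ES 0 (Suc d) = {}"
  unfolding ES_def by auto

lemma ES_Suc: "ES (Suc N) (Suc d) = ES N (Suc d) \<union> insert N ` ES N d"
proof (rule set_eqI, rule iffI)
  fix S assume h: "S \<in> ES (Suc N) (Suc d)"
  show "S \<in> ES N (Suc d) \<union> insert N ` ES N d"
  proof (cases "N \<in> S")
    case True
    have fS: "finite S" using h finite_subset unfolding ES_def by fastforce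
    have "S - {N} \<in> ES N d" using h True fS unfolding ES_def by auto
    moreover have "S = insert N (S - {N})" using True by auto
    ultimately show ?thesis by blast
  next
    case False
    then have "S \<in> ES N (Suc d)" using h unfolding ES_def by (auto simp: less_Suc_eq)
    then show ?thesis by blast
  qed
next
  fix S assume "S \<in> ES N (Suc d) \<union> insert N ` ES N d"
  then show "S \<in> ES (Suc N) (Suc d)"
  proof
    assume "S \<in> ES N (Suc d)" then show ?thesis unfolding ES_def by auto
  next
    assume "S \<in> insert N ` ES N d"
    then obtain T where T: "T \<in> ES N d" "S = insert N T" by auto
    have "finite T" "N \<notin> T" using T finite_subset unfolding ES_def by auto
    then show ?thesis using T unfolding ES_def by auto
  qed
qed

lemma esym_0: "esym N x 0 = 1"
  unfolding esym_ES ES_0 by simp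

lemma esym_zero: "esym 0 x (Suc d) = 0"
  unfolding esym_ES ES_zero by simp

lemma esym_Suc: "esym (Suc N) x (Suc d) = esym N x (Suc d) + x N * esym N x d"
proof -
  have disj: "ES N (Suc d) \<inter> insert N ` ES N d = {}" unfolding ES_def by auto
  have inj: "inj_on (insert N) (ES N d)"
  proof (rule inj_onI)
    fix A B assume "A \<in> ES N d" "B \<in> ES N d" "insert N A = insert N B"
    then have "N \<notin> A" "N \<notin> B" "insert N A = insert N B" unfolding ES_def by auto
    then show "A = B" by (metis Diff_insert_absorb)
  qed
  have "esym (Suc N) x (Suc d) = esym N x (Suc d) + (\<Sum>S\<in>insert N ` ES N d. \<Prod>j\<in>S. x j)"
    unfolding esym_ES ES_Suc by (rule sum.union_disjoint) (auto simp: ES_finite disj)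
  also have "(\<Sum>S\<in>insert N ` ES N d. \<Prod>j\<in>S. x j) = (\<Sum>T\<in>ES N d. \<Prod>j\<in>insert N T. x j)"
    by (rule sum.reindex[OF inj, unfolded comp_def])
  also have "\<dots> = (\<Sum>T\<in>ES N d. x N * (\<Prod>j\<in>T. x j))"
  proof (rule sum.cong[OF refl])
    fix T assume "T \<in> ES N d"
    then have "finite T" "N \<notin> T" using finite_subset unfolding ES_def by auto
    then show "(\<Prod>j\<in>insert N T. x j) = x N * (\<Prod>j\<in>T. x j)" by simp
  qed
  finally show ?thesis by (simp add: esym_ES sum_distrib_left)
qed

lemma e1: "esym N x 1 = psum N x 1"
  by (induction N) (simp_all add: esym_zero esym_Suc esym_0 psum_0 psum_Suc)

lemma e2: "2 * esym N x 2 = psum N x 1 ^ 2 - psum N x 2"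
proof (induction N)
  case 0 then show ?case by (simp add: esym_zero[of x 1, simplified] psum_0 numeral_2_eq_2)
next
  case (Suc N)
  have "esym (Suc N) x 2 = esym N x 2 + x N * esym N x 1" using esym_Suc[of N x 1] by (simp add: numeral_2_eq_2)
  then show ?case using Suc by (simp add: e1 e1[unfolded One_nat_def] psum_Suc algebra_simps power2_eq_square)
qed

lemma e3: "6 * esym N x 3 = psum N x 1 ^ 3 - 3 * psum N x 1 * psum N x 2 + 2 * psum N x 3"
proof (induction N)
  case 0 then show ?case using esym_zero[of x 2] by (simp add: psum_0 numeral_3_eq_3)
next
  case (Suc N)
  have "esym (Suc N) x 3 = esym N x 3 + x N * esym N x 2" using esym_Suc[of N x 2] by (simp add: numeral_3_eq_3 numeral_2_eq_2)
  then have "6 * esym (Suc N) x 3 = 6 * esym N x 3 + 3 * x N * (2 * esym N x 2)" by (simp add: algebra_simps)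
  also have "\<dots> = psum (Suc N) x 1 ^ 3 - 3 * psum (Suc N) x 1 * psum (Suc N) x 2 + 2 * psum (Suc N) x 3"
    unfolding Suc e2 psum_Suc by (simp add: algebra_simps power2_eq_square power3_eq_cube)
  finally show ?case .
qed

lemma p3_id: "psum N x 3 = 2 * hsym N x 3 + esym N x 3 - hsym N x 2 * psum N x 1"
proof -
  have "6 * psum N x 3 = 2 * (6 * hsym N x 3) + 6 * esym N x 3 - 3 * (2 * hsym N x 2) * psum N x 1"
    unfolding h3 e3 h2 by (simp add: algebra_simps power2_eq_square power3_eq_cube)
  then show ?thesis by simp
qed


theorem proposition3p4:
  fixes k r N :: nat and x :: "nat \<Rightarrow> real"
  assumes "k \<ge> 1" and "r \<ge> 1"
  defines "m \<equiv> (r + 1) div 2"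
  shows "psi N x (3 # replicate k 2 @ replicate r 1) =
    (if odd r then
       (psi N x (replicate (m + k + 1) 2)
          - hsym N x 2 * psum N x 1 ^ (r + 1) * psi N x (replicate k 2))
       + psum N x 1 ^ r * (2 * hsym N x 3 + esym N x 3) * psi N x (replicate k 2)
     else
       psum N x 1 * (psi N x (replicate (m + k + 1) 2)
          - hsym N x 2 * psum N x 1 ^ r * psi N x (replicate k 2))
       + psum N x 1 ^ r * (2 * hsym N x 3 + esym N x 3) * psi N x (replicate k 2))"
proof -
  define n where "n = 3 + 2*k + r"
  define P1 where "P1 = psum N x 1"
  define P2 where "P2 = psum N x 2"
  have main: "psi N x (3 # replicate k 2 @ replicate r 1) =
    (\<Sum>i\<le>n div 2. P2 ^ i * P1 ^ (n - 2*i))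
    + psum N x 3 * (\<Sum>i\<le>k. P2 ^ i * P1 ^ (2*k + r - 2*i))"
    using psi_main[OF n_def] unfolding P1_def P2_def .
  have S2: "(\<Sum>i\<le>k. P2 ^ i * P1 ^ (2*k + r - 2*i)) = P1 ^ r * psi N x (replicate k 2)"
  proof -
    have "(\<Sum>i\<le>k. P2 ^ i * P1 ^ (2*k + r - 2*i)) = (\<Sum>i\<le>k. P1 ^ r * (P2 ^ i * P1 ^ (2*k - 2*i)))"
    proof (rule sum.cong[OF refl])
      fix i assume "i \<in> {..k}"
      then have "2*k + r - 2*i = r + (2*k - 2*i)" by auto
      then show "P2 ^ i * P1 ^ (2*k + r - 2*i) = P1 ^ r * (P2 ^ i * P1 ^ (2*k - 2*i))"
        by (simp add: power_add)
    qed
    then show ?thesis by (simp add: psi_twos P1_def P2_def sum_distrib_left)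
  qed
  have S1: "(\<Sum>i\<le>n div 2. P2 ^ i * P1 ^ (n - 2*i)) =
     (if odd r then 1 else P1) * psi N x (replicate (m + k + 1) 2)"
  proof (cases "odd r")
    case True
    then have nd: "n div 2 = m + k + 1" "n = 2*(m+k+1)" unfolding n_def m_def by presburger+
    have ps: "psi N x (replicate (m + k + 1) 2) = (\<Sum>i\<le>m+k+1. P2 ^ i * P1 ^ (2*(m+k+1) - 2*i))"
      unfolding P1_def P2_def by (rule psi_twos)
    have "(\<Sum>i\<le>n div 2. P2 ^ i * P1 ^ (n - 2*i)) = (\<Sum>i\<le>m+k+1. P2 ^ i * P1 ^ (2*(m+k+1) - 2*i))"
      unfolding nd(1) by (rule sum.cong[OF refl]) (simp add: nd(2))
    then show ?thesis using True ps by simp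
  next
    case False
    then have nd: "n div 2 = m + k + 1" "n = 2*(m+k+1) + 1" unfolding n_def m_def by presburger+
    have "(\<Sum>i\<le>m+k+1. P2 ^ i * P1 ^ (n - 2*i)) = (\<Sum>i\<le>m+k+1. P1 * (P2 ^ i * P1 ^ (2*(m+k+1) - 2*i)))"
    proof (rule sum.cong[OF refl])
      fix i assume "i \<in> {..m+k+1}"
      then have "n - 2*i = Suc (2*(m+k+1) - 2*i)" using nd by auto
      then show "P2 ^ i * P1 ^ (n - 2*i) = P1 * (P2 ^ i * P1 ^ (2*(m+k+1) - 2*i))" by simp
    qed
    also have "\<dots> = P1 * psi N x (replicate (m + k + 1) 2)"
      unfolding P1_def P2_def psi_twos sum_distrib_left ..
    finally show ?thesis using False unfolding nd(1) by simp
  qed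
  show ?thesis
    unfolding main S1 S2 p3_id P1_def[symmetric] by (simp add: algebra_simps)
qed

end
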